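(* Let $\Gamma$ and $\Delta$ be finite subsets of ${\sf Frm}$. If the sequent $\Gamma\Rightarrow\Delta$ is derivable in ${\sf GWF_{N_2}}$, then $\vdash_{\sf WF_{N_2}}\bigwedge\Gamma\rightarrow\bigvee\Delta$.
   Context: Language: countably many atoms $p,q,\dots$, the constant $\bot$, and binary connectives $\wedge,\vee,\rightarrow$ ($\rightarrow$ is strict implication). ${\sf Frm}$ is the set of formulas built from atoms and $\bot$ with $\wedge,\vee,\rightarrow$; $A,B,C,D$ range over ${\sf Frm}$. Let $\supset$ be a new binary symbol (material implication) and ${\sf Frm_1}={\sf Frm}\cup\{A\supset B : A,B\in{\sf Frm}\}$ (no nesting of $\supset$). ${\sf Frm_2}$ is the smallest set containing ${\sf Frm_1}$ and closed under $\wedge$ and $\vee$; $X,Y$ range over ${\sf Frm_2}$. A sequent is $\Gamma\Rightarrow\Delta$ with $\Gamma,\Delta$ finite multisets of ${\sf Frm_2}$-formulas. The calculus ${\sf GWF_{N_2}}$ has initial sequents $(id)$ $p,\Gamma\Rightarrow\Delta,p$ ($p$ an atom) and $(L_\bot)$ $\bot,\Gamma\Rightarrow\Delta$, and rules (premises / conclusion): $(L_\wedge)$ $X,Y,\Gamma\Rightarrow\Delta$ / $X\wedge Y,\Gamma\Rightarrow\Delta$; $(R_\wedge)$ $\Gamma\Rightarrow\Delta,X$ and $\Gamma\Rightarrow\Delta,Y$ / $\Gamma\Rightarrow\Delta,X\wedge Y$; $(L_\vee)$ $X,\Gamma\Rightarrow\Delta$ and $Y,\Gamma\Rightarrow\Delta$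 / $X\vee Y,\Gamma\Rightarrow\Delta$; $(R_\vee)$ $\Gamma\Rightarrow\Delta,X,Y$ / $\Gamma\Rightarrow\Delta,X\vee Y$; $(L_\supset)$ $\Gamma\Rightarrow\Delta,A$ and $B,\Gamma\Rightarrow\Delta$ / $A\supset B,\Gamma\Rightarrow\Delta$; $(R_\supset)$ $A,\Gamma\Rightarrow\Delta,B$ / $\Gamma\Rightarrow\Delta,A\supset B$; $(LR_\rightarrow)$ $C\supset D,A\Rightarrow B$ / $\Gamma,C\rightarrow D\Rightarrow\Delta,A\rightarrow B$; $(R_\rightarrow)$ $A\Rightarrow B$ / $\Gamma\Rightarrow\Delta,A\rightarrow B$. Here $A,B,C,D\in{\sf Frm}$, $X,Y\in{\sf Frm_2}$, and $\Gamma,\Delta$ are arbitrary finite multisets of ${\sf Frm_2}$-formulas. The Hilbert system ${\sf WF_{N_2}}$ over ${\sf Frm}$ has axiom schemes $A\rightarrow(A\vee B)$; $B\rightarrow(A\vee B)$; $(A\wedge B)\rightarrow A$; $(A\wedge B)\rightarrow B$; $A\wedge(B\vee C)\rightarrow(A\wedge B)\vee(A\wedge C)$; $A\rightarrow A$; $\bot\rightarrow A$; and rules (from theorems to a theorem): from $A$ and $A\rightarrow B$ infer $B$; from $A$ infer $B\rightarrow A$; from $A\rightarrow B$ and $B\rightarrow C$ infer $A\rightarrow C$; from $A\rightarrow B$ and $A\rightarrow C$ infer $A\rightarrow(B\wedge C)$; from $A\rightarrow C$ and $B\rightarrow C$ infer $(A\vee B)\rightarrow C$; from $A$ and $B$ infer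 $A\wedge B$; (${\sf N_2}$) from $C\rightarrow A\vee D$ and $C\wedge B\rightarrow D$ infer $(A\rightarrow B)\rightarrow(C\rightarrow D)$. $\vdash_{\sf WF_{N_2}}A$ means $A$ is a theorem of this system. $\bigwedge\Gamma$ and $\bigvee\Delta$ denote the conjunction and disjunction of the members of $\Gamma$, resp. $\Delta$ (with the empty conjunction read as $\top:=\bot\rightarrow\bot$ and the empty disjunction as $\bot$). *)

theory Defs
  imports Main "HOL-Library.Multiset"
begin

text \<open>One datatype for all formulas; SImp is strict implication, MImp material implication.\<close>
datatype fm = Atom nat | Bot | Conj fm fm | Disj fm fm | SImp fm fm | MImp fm fm

fun frm :: "fm \<Rightarrow> bool" where
  "frm (Atom p) = True"
| "frm Bot = True"
| "frm (Conj A B) = (frm A \<and> frm B)"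
| "frm (Disj A B) = (frm A \<and> frm B)"
| "frm (SImp A B) = (frm A \<and> frm B)"
| "frm (MImp A B) = False"

text \<open>Frm2: closure of Frm1 = Frm plus non-nested material implications under conjunction and disjunction.\<close>
fun frm2 :: "fm \<Rightarrow> bool" where
  "frm2 (Atom p) = True"
| "frm2 Bot = True"
| "frm2 (Conj X Y) = (frm2 X \<and> frm2 Y)"
| "frm2 (Disj X Y) = (frm2 X \<and> frm2 Y)"
| "frm2 (SImp A B) = (frm A \<and> frm B)"
| "frm2 (MImp A B) = (frm A \<and> frm B)"

definition wf_seq :: "fm multiset \<Rightarrow> fm multiset \<Rightarrow> bool" where
  "wf_seq G D \<longleftrightarrow> (\<forall>X\<in>#G. frm2 X) \<and> (\<forall>X\<in>#D. frm2 X)"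

inductive gwf :: "fm multiset \<Rightarrow> fm multiset \<Rightarrow> bool" where
  id: "wf_seq (add_mset (Atom p) G) (add_mset (Atom p) D) \<Longrightarrow>
       gwf (add_mset (Atom p) G) (add_mset (Atom p) D)"
| LBot: "wf_seq (add_mset Bot G) D \<Longrightarrow> gwf (add_mset Bot G) D"
| LConj: "wf_seq (add_mset (Conj X Y) G) D \<Longrightarrow> gwf (add_mset X (add_mset Y G)) D \<Longrightarrow>
       gwf (add_mset (Conj X Y) G) D"
| RConj: "wf_seq G (add_mset (Conj X Y) D) \<Longrightarrow> gwf G (add_mset X D) \<Longrightarrow> gwf G (add_mset Y D) \<Longrightarrow>
       gwf G (add_mset (Conj X Y) D)"
| LDisj: "wf_seq (add_mset (Disj X Y) G) D \<Longrightarrow> gwf (add_mset X G) D \<Longrightarrow> gwf (add_mset Y G) D \<Longrightarrow>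
       gwf (add_mset (Disj X Y) G) D"
| RDisj: "wf_seq G (add_mset (Disj X Y) D) \<Longrightarrow> gwf G (add_mset X (add_mset Y D)) \<Longrightarrow>
       gwf G (add_mset (Disj X Y) D)"
| LMImp: "wf_seq (add_mset (MImp A B) G) D \<Longrightarrow> gwf G (add_mset A D) \<Longrightarrow> gwf (add_mset B G) D \<Longrightarrow>
       gwf (add_mset (MImp A B) G) D"
| RMImp: "wf_seq G (add_mset (MImp A B) D) \<Longrightarrow> gwf (add_mset A G) (add_mset B D) \<Longrightarrow>
       gwf G (add_mset (MImp A B) D)"
| LRSImp: "wf_seq (add_mset (SImp C E) G) (add_mset (SImp A B) D) \<Longrightarrow>
       gwf {# MImp C E, A #} {# B #} \<Longrightarrow>
       gwf (add_mset (SImp C E) G) (add_mset (SImp A B) D)"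
| RSImp: "wf_seq G (add_mset (SImp A B) D) \<Longrightarrow> gwf {# A #} {# B #} \<Longrightarrow>
       gwf G (add_mset (SImp A B) D)"

definition Top :: fm where "Top = SImp Bot Bot"

inductive wfn2 :: "fm \<Rightarrow> bool" where
  ax1: "frm A \<Longrightarrow> frm B \<Longrightarrow> wfn2 (SImp A (Disj A B))"
| ax2: "frm A \<Longrightarrow> frm B \<Longrightarrow> wfn2 (SImp B (Disj A B))"
| ax3: "frm A \<Longrightarrow> frm B \<Longrightarrow> wfn2 (SImp (Conj A B) A)"
| ax4: "frm A \<Longrightarrow> frm B \<Longrightarrow> wfn2 (SImp (Conj A B) B)"
| ax5: "frm A \<Longrightarrow> frm B \<Longrightarrow> frm C \<Longrightarrow>
        wfn2 (SImp (Conj A (Disj B C)) (Disj (Conj A B) (Conj A C)))"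
| ax6: "frm A \<Longrightarrow> wfn2 (SImp A A)"
| ax7: "frm A \<Longrightarrow> wfn2 (SImp Bot A)"
| mp: "wfn2 A \<Longrightarrow> wfn2 (SImp A B) \<Longrightarrow> wfn2 B"
| wk: "wfn2 A \<Longrightarrow> frm B \<Longrightarrow> wfn2 (SImp B A)"
| trans: "wfn2 (SImp A B) \<Longrightarrow> wfn2 (SImp B C) \<Longrightarrow> wfn2 (SImp A C)"
| conjR: "wfn2 (SImp A B) \<Longrightarrow> wfn2 (SImp A C) \<Longrightarrow> wfn2 (SImp A (Conj B C))"
| disjL: "wfn2 (SImp A C) \<Longrightarrow> wfn2 (SImp B C) \<Longrightarrow> wfn2 (SImp (Disj A B) C)"
| adj: "wfn2 A \<Longrightarrow> wfn2 B \<Longrightarrow> wfn2 (Conj A B)"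
| N2: "wfn2 (SImp C (Disj A D)) \<Longrightarrow> wfn2 (SImp (Conj C B) D) \<Longrightarrow>
       wfn2 (SImp (SImp A B) (SImp C D))"

fun conjs :: "fm list \<Rightarrow> fm" where
  "conjs [] = Top"
| "conjs [A] = A"
| "conjs (A # B # xs) = Conj A (conjs (B # xs))"

fun disjs :: "fm list \<Rightarrow> fm" where
  "disjs [] = Bot"
| "disjs [A] = A"
| "disjs (A # B # xs) = Disj A (disjs (B # xs))"

end

theory Submission
  imports Defs
begin

lemma frm_Top[simp]: "frm Top" by (simp add: Top_def)
lemma wfn2_Top: "wfn2 Top" unfolding Top_def by (rule ax7) simp

lemma conj_mono1:
  assumes "frm m1" "frm m2" "frm X"
  shows "wfn2 (SImp (Conj (Conj m1 m2) X) (Conj m1 X))"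
  by (rule conjR, rule trans, rule ax3, auto simp: assms intro: ax3 ax4)

lemma conj_mono2:
  assumes "frm m1" "frm m2" "frm X"
  shows "wfn2 (SImp (Conj (Conj m1 m2) X) (Conj m2 X))"
  by (rule conjR, rule trans, rule ax3, auto simp: assms intro: ax3 ax4)

definition pf :: "fm set \<Rightarrow> bool" where
 "pf F \<longleftrightarrow> (\<forall>X\<in>F. frm X) \<and> Top \<in> F \<and> Bot \<notin> F
   \<and> (\<forall>X Y. X\<in>F \<longrightarrow> frm Y \<longrightarrow> wfn2 (SImp X Y) \<longrightarrow> Y\<in>F)
   \<and> (\<forall>X Y. X\<in>F \<longrightarrow> Y\<in>F \<longrightarrow> Conj X Y \<in> F)
   \<and> (\<forall>X Y. Disj X Y \<in> F \<longrightarrow> X\<in>F \<or> Y\<in>F)"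

definition fil :: "fm \<Rightarrow> fm \<Rightarrow> fm set \<Rightarrow> bool" where
 "fil A B F \<longleftrightarrow> (\<forall>X\<in>F. frm X)
   \<and> (\<forall>X Y. X\<in>F \<longrightarrow> frm Y \<longrightarrow> wfn2 (SImp X Y) \<longrightarrow> Y\<in>F)
   \<and> (\<forall>X Y. X\<in>F \<longrightarrow> Y\<in>F \<longrightarrow> Conj X Y \<in> F) \<and> A \<in> F \<and> B \<notin> F"

lemma stone:
  assumes fA: "frm A" and fB: "frm B" and np: "\<not> wfn2 (SImp A B)"
  shows "\<exists>F. pf F \<and> A\<in>F \<and> B\<notin>F"
proof -
  let ?S = "{F. fil A B F}"
  have "\<forall>C\<in>chains ?S. \<exists>U\<in>?S. \<forall>X\<in>C. X \<subseteq> U"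
  proof
    fix C assume C: "C \<in> chains ?S"
    show "\<exists>U\<in>?S. \<forall>X\<in>C. X \<subseteq> U"
    proof (cases "C = {}")
      case True
      let ?F0 = "{X. frm X \<and> wfn2 (SImp A X)}"
      have "fil A B ?F0" unfolding fil_def
      proof (intro conjI allI impI ballI)
        fix X Y assume "X \<in> ?F0" "frm Y" "wfn2 (SImp X Y)"
        then show "Y \<in> ?F0" using trans[of A X Y] by auto
      next
        fix X Y assume "X \<in> ?F0" "Y \<in> ?F0"
        then show "Conj X Y \<in> ?F0" using conjR[of A X Y] by auto
      qed (use np fA ax6[OF fA] in auto)
      then show ?thesis using True by auto
    next
      case False
      have sub: "C \<subseteq> ?S" using chainsD2[OF C] .
      have "fil A B (\<Union>C)" unfolding fil_def
      proof (intro conjI allI impI ballI)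
        fix X assume "X \<in> \<Union>C" then show "frm X" using sub by (auto simp: fil_def)
      next
        fix X Y assume "X \<in> \<Union>C" "frm Y" "wfn2 (SImp X Y)"
        then show "Y \<in> \<Union>C" using sub unfolding fil_def by blast
      next
        fix X Y assume a: "X \<in> \<Union>C" "Y \<in> \<Union>C"
        then obtain F1 F2 where f: "F1\<in>C" "F2\<in>C" "X\<in>F1" "Y\<in>F2" by auto
        then have "F1 \<subseteq> F2 \<or> F2 \<subseteq> F1" using chainsD[OF C] by blast
        then show "Conj X Y \<in> \<Union>C"
        proof
          assume "F1 \<subseteq> F2" then show ?thesis using f sub unfolding fil_def by blast
        next
          assume "F2 \<subseteq> F1" then show ?thesis using f sub unfolding fil_def by blast
        qed
      next
        show "A \<in> \<Union>C" using False sub unfolding fil_def by blast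
      next
        show "B \<notin> \<Union>C" using sub unfolding fil_def by blast
      qed
      then show ?thesis by auto
    qed
  qed
  from Zorn_Lemma2[OF this] obtain M where M0: "M \<in> ?S"
    and max0: "\<forall>X\<in>?S. M \<subseteq> X \<longrightarrow> X = M" by blast
  have M: "fil A B M" using M0 by simp
  have max: "\<And>X. fil A B X \<Longrightarrow> M \<subseteq> X \<Longrightarrow> X = M" using max0 by simp
  have Mfrm: "\<And>X. X\<in>M \<Longrightarrow> frm X" and Mup: "\<And>X Y. X\<in>M \<Longrightarrow> frm Y \<Longrightarrow> wfn2 (SImp X Y) \<Longrightarrow> Y\<in>M"
    and Mconj: "\<And>X Y. X\<in>M \<Longrightarrow> Y\<in>M \<Longrightarrow> Conj X Y \<in> M" and AM: "A\<in>M" and BM: "B\<notin>M"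
    using M unfolding fil_def by blast+
  have TopM: "Top \<in> M" using Mup[OF AM frm_Top] wk[OF wfn2_Top fA] by blast
  have BotM: "Bot \<notin> M" using Mup[of Bot B] ax7[OF fB] BM fB by auto
  have ext: "\<exists>m\<in>M. wfn2 (SImp (Conj m X) B)" if X: "frm X" "X \<notin> M" for X
  proof (rule ccontr)
    assume nb: "\<not> ?thesis"
    let ?MX = "{Z. frm Z \<and> (\<exists>m\<in>M. wfn2 (SImp (Conj m X) Z))}"
    have "fil A B ?MX" unfolding fil_def
    proof (intro conjI allI impI ballI)
      fix Z Y assume "Z \<in> ?MX" "frm Y" "wfn2 (SImp Z Y)"
      then show "Y \<in> ?MX" using trans[of "Conj _ X" Z Y] by blast
    next
      fix Z1 Z2 assume "Z1 \<in> ?MX" "Z2 \<in> ?MX"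
      then obtain m1 m2 where m: "m1\<in>M" "m2\<in>M" "frm Z1" "frm Z2"
        "wfn2 (SImp (Conj m1 X) Z1)" "wfn2 (SImp (Conj m2 X) Z2)" by auto
      have "Conj m1 m2 \<in> M" using m Mconj by auto
      moreover have "wfn2 (SImp (Conj (Conj m1 m2) X) (Conj Z1 Z2))"
      proof (rule conjR)
        show "wfn2 (SImp (Conj (Conj m1 m2) X) Z1)"
          using trans[OF conj_mono1 m(5)] m X Mfrm by blast
        show "wfn2 (SImp (Conj (Conj m1 m2) X) Z2)"
          using trans[OF conj_mono2 m(6)] m X Mfrm by blast
      qed
      ultimately show "Conj Z1 Z2 \<in> ?MX" using m by auto
    next
      show "A \<in> ?MX" using AM fA X Mfrm by (auto intro!: bexI[of _ A] ax3)
    next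
      show "B \<notin> ?MX" using nb by auto
    qed (auto)
    moreover have "M \<subseteq> ?MX" using X Mfrm by (auto intro: ax3)
    moreover have "X \<in> ?MX" using X TopM by (auto intro!: bexI[of _ Top] ax4)
    ultimately show False using max X by blast
  qed
  have "pf M" unfolding pf_def
  proof (intro conjI allI impI ballI)
    fix X Y assume D: "Disj X Y \<in> M"
    show "X \<in> M \<or> Y \<in> M"
    proof (rule ccontr)
      assume "\<not> ?thesis"
      hence nX: "X \<notin> M" and nY: "Y \<notin> M" by auto
      have fX: "frm X" and fY: "frm Y" using Mfrm[OF D] by auto
      obtain m1 where m1: "m1\<in>M" "wfn2 (SImp (Conj m1 X) B)" using ext[OF fX nX] by blast
      obtain m2 where m2: "m2\<in>M" "wfn2 (SImp (Conj m2 Y) B)" using ext[OF fY nY] by blast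
      let ?m = "Conj m1 m2"
      have fm: "frm m1" "frm m2" using m1 m2 Mfrm by auto
      have mM: "?m \<in> M" using m1 m2 Mconj by auto
      have c: "Conj ?m (Disj X Y) \<in> M" using mM D Mconj by auto
      have "wfn2 (SImp (Conj ?m (Disj X Y)) (Disj (Conj ?m X) (Conj ?m Y)))"
        using fm fX fY by (auto intro: ax5)
      moreover have "wfn2 (SImp (Disj (Conj ?m X) (Conj ?m Y)) B)"
      proof (rule disjL)
        show "wfn2 (SImp (Conj ?m X) B)" using trans[OF conj_mono1 m1(2)] fm fX by blast
        show "wfn2 (SImp (Conj ?m Y) B)" using trans[OF conj_mono2 m2(2)] fm fY by blast
      qed
      ultimately have "wfn2 (SImp (Conj ?m (Disj X Y)) B)" by (rule trans)
      then show False using Mup[OF c fB] BM by auto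
    qed
  next
    fix X assume "X \<in> M" then show "frm X" by (rule Mfrm)
  next
    fix X Y assume "X \<in> M" "frm Y" "wfn2 (SImp X Y)" then show "Y \<in> M" by (rule Mup)
  next
    fix X Y assume "X \<in> M" "Y \<in> M" then show "Conj X Y \<in> M" by (rule Mconj)
  qed (rule TopM, rule BotM)
  then show ?thesis using AM BM by blast
qed


fun ev :: "fm set \<Rightarrow> fm \<Rightarrow> bool" where
  "ev F (Conj X Y) = (ev F X \<and> ev F Y)"
| "ev F (Disj X Y) = (ev F X \<or> ev F Y)"
| "ev F (MImp A B) = (A \<notin> F \<or> B \<in> F)"
| "ev F (Atom p) = (Atom p \<in> F)"
| "ev F Bot = (Bot \<in> F)"
| "ev F (SImp A B) = (SImp A B \<in> F)"

lemma pf_conj: "pf F \<Longrightarrow> frm X \<Longrightarrow> frm Y \<Longrightarrow> Conj X Y \<in> F \<longleftrightarrow> X \<in> F \<and> Y \<in> F"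
  unfolding pf_def by (meson ax3 ax4)

lemma pf_disj: "pf F \<Longrightarrow> frm X \<Longrightarrow> frm Y \<Longrightarrow> Disj X Y \<in> F \<longleftrightarrow> X \<in> F \<or> Y \<in> F"
  unfolding pf_def by (meson ax1 ax2 frm.simps(4))

lemma ev_frm: "pf F \<Longrightarrow> frm X \<Longrightarrow> ev F X = (X \<in> F)"
  by (induction X) (auto simp: pf_conj pf_disj)

lemma pf_thm: "pf F \<Longrightarrow> wfn2 X \<Longrightarrow> frm X \<Longrightarrow> X \<in> F"
  unfolding pf_def using wk[of X Top] by auto

lemma pf_up: "pf F \<Longrightarrow> X \<in> F \<Longrightarrow> frm Y \<Longrightarrow> wfn2 (SImp X Y) \<Longrightarrow> Y \<in> F"
  unfolding pf_def by blast

lemma valid_stone: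
  assumes "frm A" "frm B" "\<And>F. pf F \<Longrightarrow> A \<in> F \<Longrightarrow> B \<in> F"
  shows "wfn2 (SImp A B)"
  using stone[OF assms(1,2)] assms(3) by blast

lemma sound:
  "gwf G D \<Longrightarrow> pf F \<Longrightarrow> \<forall>X\<in>#G. ev F X \<Longrightarrow> \<exists>X\<in>#D. ev F X"
proof (induction G D arbitrary: F rule: gwf.induct)
  case (id p G D) then show ?case by auto
next
  case (LBot G D) then show ?case by (auto simp: pf_def)
next
  case (LConj X Y G D) then show ?case by auto
next
  case (RConj G X Y D) then show ?case by fastforce
next
  case (LDisj X Y G D) then show ?case by fastforce
next
  case (RDisj G X Y D) then show ?case by fastforce
next
  case (LMImp A B G D)
  have fA: "frm A" and fB: "frm B" using LMImp.hyps(1) by (auto simp: wf_seq_def)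
  show ?case
  proof (cases "A \<in> F")
    case True
    then have "B \<in> F" using LMImp.prems by auto
    then show ?thesis using LMImp.IH(2)[of F] LMImp.prems fB ev_frm by auto
  next
    case False
    then show ?thesis using LMImp.IH(1)[of F] LMImp.prems fA ev_frm by auto
  qed
next
  case (RMImp G A B D)
  have fA: "frm A" and fB: "frm B" using RMImp.hyps(1) by (auto simp: wf_seq_def)
  show ?case
  proof (cases "A \<in> F")
    case True
    then show ?thesis using RMImp.IH[of F] RMImp.prems fA fB ev_frm by auto
  next
    case False
    then show ?thesis by auto
  qed
next
  case (LRSImp C E G A B D)
  have f: "frm C" "frm E" "frm A" "frm B" using LRSImp.hyps(1) by (auto simp: wf_seq_def)
  have IH: "\<And>F. pf F \<Longrightarrow> (C \<notin> F \<or> E \<in> F) \<Longrightarrow> A \<in> F \<Longrightarrow> B \<in> F"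
    using LRSImp.IH f ev_frm by fastforce
  have h1: "wfn2 (SImp A (Disj C B))"
  proof (rule valid_stone)
    fix F assume F: "pf F" "A \<in> F"
    show "Disj C B \<in> F" using IH[OF F(1) _ F(2)] pf_disj[OF F(1) f(1) f(4)] by blast
  qed (use f in auto)
  have h2: "wfn2 (SImp (Conj A E) B)"
  proof (rule valid_stone)
    fix F assume F: "pf F" "Conj A E \<in> F"
    then show "B \<in> F" using IH[OF F(1)] pf_conj[OF F(1) f(3) f(2)] by blast
  qed (use f in auto)
  have N: "wfn2 (SImp (SImp C E) (SImp A B))" by (rule N2[OF h1 h2])
  have "SImp C E \<in> F" using LRSImp.prems by auto
  then have "SImp A B \<in> F" using pf_up[OF LRSImp.prems(1) _ _ N] f by auto
  then show ?case by auto
next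
  case (RSImp G A B D)
  have f: "frm A" "frm B" using RSImp.hyps(1) by (auto simp: wf_seq_def)
  have "wfn2 (SImp A B)"
    by (rule valid_stone) (use f RSImp.IH ev_frm in auto)
  then have "SImp A B \<in> F" using pf_thm[OF RSImp.prems(1)] f by auto
  then show ?case by auto
qed

lemma frm_conjs: "\<forall>x\<in>set gs. frm x \<Longrightarrow> frm (conjs gs)"
  by (induction gs rule: conjs.induct) auto

lemma frm_disjs: "\<forall>x\<in>set gs. frm x \<Longrightarrow> frm (disjs gs)"
  by (induction gs rule: disjs.induct) auto

lemma pf_conjs: "pf F \<Longrightarrow> \<forall>x\<in>set gs. frm x \<Longrightarrow> conjs gs \<in> F \<longleftrightarrow> (\<forall>x\<in>set gs. x \<in> F)"
proof (induction gs rule: conjs.induct)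
  case 1 then show ?case by (simp add: pf_def)
next
  case (2 A) then show ?case by simp
next
  case (3 A B xs) then show ?case using pf_conj[OF 3(2), of A "conjs (B # xs)"] frm_conjs[of "B # xs"] by auto
qed

lemma pf_disjs: "pf F \<Longrightarrow> \<forall>x\<in>set gs. frm x \<Longrightarrow> disjs gs \<in> F \<longleftrightarrow> (\<exists>x\<in>set gs. x \<in> F)"
proof (induction gs rule: disjs.induct)
  case 1 then show ?case by (simp add: pf_def)
next
  case (2 A) then show ?case by simp
next
  case (3 A B xs) then show ?case using pf_disj[OF 3(2), of A "disjs (B # xs)"] frm_disjs[of "B # xs"] by auto
qed

theorem theorem3p10:
  assumes "finite \<Gamma>" and "finite \<Delta>"
    and "\<forall>A\<in>\<Gamma>. frm A" and "\<forall>A\<in>\<Delta>. frm A"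
    and "gwf (mset_set \<Gamma>) (mset_set \<Delta>)"
  shows "\<forall>gs ds. distinct gs \<and> set gs = \<Gamma> \<and> distinct ds \<and> set ds = \<Delta> \<longrightarrow>
           wfn2 (SImp (conjs gs) (disjs ds))"
proof (intro allI impI)
  fix gs ds assume h: "distinct gs \<and> set gs = \<Gamma> \<and> distinct ds \<and> set ds = \<Delta>"
  have fg: "\<forall>x\<in>set gs. frm x" and fd: "\<forall>x\<in>set ds. frm x" using h assms(3,4) by auto
  show "wfn2 (SImp (conjs gs) (disjs ds))"
  proof (rule valid_stone)
    fix F assume F: "pf F" "conjs gs \<in> F"
    have "\<forall>X\<in>#mset_set \<Gamma>. ev F X"
      using F pf_conjs[OF F(1) fg] h assms(1,3) ev_frm[OF F(1)] by auto
    then obtain X where "X \<in># mset_set \<Delta>" "ev F X" using sound[OF assms(5) F(1)] by blast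
    then have "X \<in> set ds" "X \<in> F" using h assms(2,4) ev_frm[OF F(1)] by auto
    then show "disjs ds \<in> F" using pf_disjs[OF F(1) fd] by auto
  qed (use fg fd frm_conjs frm_disjs in auto)
qed

end
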